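(* Let ${\bm{x}}_i^m\in\mathbb{R}^d$ ($m\in[M]$, $i\in[n]$) satisfy $\|{\bm{x}}_i^m\|\le1$ and be linearly separable. Let $\ell(z)=\log(1+e^{-z})$, $F_m({\bm{w}})=\frac1n\sum_i\ell(\langle{\bm{w}},{\bm{x}}_i^m\rangle)$, $F=\frac1M\sum_mF_m$. Run Local GD with any ${\bm{w}}_0$, $\eta>0$, $K\in\mathbb{N}$: ${\bm{w}}_{r,0}^m={\bm{w}}_r$, ${\bm{w}}_{r,k+1}^m={\bm{w}}_{r,k}^m-\eta\nabla F_m({\bm{w}}_{r,k}^m)$ ($k=0,\dots,K-1$), ${\bm{w}}_{r+1}=\frac1M\sum_m{\bm{w}}_{r,K}^m$. If $F({\bm{w}}_r)\le1/(\eta KM)$ for some $r\ge0$, then $\|{\bm{w}}_{r,k}^m-{\bm{w}}_r\|\le1$ for every $m\in[M]$ and $k\in[K]$.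
   Context: Linear separability means there is ${\bm{w}}$ with $\langle{\bm{w}},{\bm{x}}_i^m\rangle>0$ for all $m,i$ (labels absorbed into data). $[K]=\{1,\dots,K\}$. *)

theory Defs
  imports "HOL-Analysis.Analysis"
begin

definition logloss :: "real \<Rightarrow> real" where
  "logloss z = ln (1 + exp (- z))"

definition Floc :: "nat \<Rightarrow> (nat \<Rightarrow> nat \<Rightarrow> 'a::real_inner) \<Rightarrow> nat \<Rightarrow> 'a \<Rightarrow> real" where
  "Floc n x m w = (1 / real n) * (\<Sum>i=1..n. logloss (inner w (x m i)))"

definition Fglob :: "nat \<Rightarrow> nat \<Rightarrow> (nat \<Rightarrow> nat \<Rightarrow> 'a::real_inner) \<Rightarrow> 'a \<Rightarrow> real" where
  "Fglob M n x w = (1 / real M) * (\<Sum>m=1..M. Floc n x m w)"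

definition grad :: "('a::real_inner \<Rightarrow> real) \<Rightarrow> 'a \<Rightarrow> 'a" where
  "grad f w = (THE D. GDERIV f w :> D)"

fun local_iter :: "nat \<Rightarrow> (nat \<Rightarrow> nat \<Rightarrow> 'a::real_inner) \<Rightarrow> real \<Rightarrow> nat \<Rightarrow> 'a \<Rightarrow> nat \<Rightarrow> 'a" where
  "local_iter n x eta m w 0 = w"
| "local_iter n x eta m w (Suc k) =
     local_iter n x eta m w k - eta *\<^sub>R grad (Floc n x m) (local_iter n x eta m w k)"

fun round_iter :: "nat \<Rightarrow> nat \<Rightarrow> (nat \<Rightarrow> nat \<Rightarrow> 'a::real_inner) \<Rightarrow> real \<Rightarrow> nat \<Rightarrow> 'a \<Rightarrow> nat \<Rightarrow> 'a" where
  "round_iter M n x eta K w0 0 = w0"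
| "round_iter M n x eta K w0 (Suc r) =
     (1 / real M) *\<^sub>R (\<Sum>m=1..M. local_iter n x eta m (round_iter M n x eta K w0 r) K)"

end

theory Submission
  imports Defs
begin

definition sig :: "real \<Rightarrow> real" where "sig z = 1 / (1 + exp z)"

lemma logloss_deriv: "(logloss has_real_derivative (- sig z)) (at z)"
proof -
  have "((\<lambda>z. ln (1 + exp (- z))) has_real_derivative (1 / (1 + exp (- z))) * (exp (- z) * (- 1))) (at z)"
    by (auto intro!: derivative_eq_intros simp: add_pos_pos)
  moreover have "(1 / (1 + exp (- z))) * (exp (- z) * (- 1)) = - (1 / (1 + exp z))"
    by (simp add: exp_minus field_simps)
  ultimately show ?thesis unfolding logloss_def[abs_def] sig_def by simp
qed

lemma sig_nonneg: "0 \<le> sig z" unfolding sig_def by (simp add: add_pos_pos)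
lemma logloss_nonneg: "0 \<le> logloss z" unfolding logloss_def by simp

lemma sig_le_logloss: "sig z \<le> logloss z"
proof -
  define u where "u = exp (- z)"
  have u: "u > 0" unfolding u_def by simp
  have s: "sig z = u / (1 + u)" unfolding sig_def u_def by (simp add: exp_minus field_simps)
  have "ln (1 / (1 + u)) \<le> 1 / (1 + u) - 1" using u by (intro ln_le_minus_one) simp
  then have "ln (1 + u) \<ge> 1 - 1 / (1 + u)" using u by (simp add: ln_div)
  moreover have "1 - 1 / (1 + u) = u / (1 + u)" using u by (simp add: field_simps)
  ultimately show ?thesis unfolding s logloss_def u_def by simp
qed

lemma exp_quad: fixes y :: real assumes "\<bar>y\<bar> \<le> 1" shows "exp y \<le> 1 + y + y\<^sup>2"
proof (cases "y \<ge> 0")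
  case True then show ?thesis using assms exp_bound by simp
next
  case False
  have "exp (- y) \<ge> 1 - y" using exp_ge_add_one_self[of "- y"] by simp
  then have "exp y \<le> 1 / (1 - y)" using False by (simp add: exp_minus field_simps)
  also have "\<dots> \<le> 1 + y + y\<^sup>2"
  proof -
    have "(1 + y + y\<^sup>2) * (1 - y) = 1 - y^3" by (simp add: algebra_simps power2_eq_square power3_eq_cube)
    moreover have "y^3 \<le> 0"
    proof -
      have "y^3 = y * y\<^sup>2" by (simp add: power2_eq_square power3_eq_cube)
      moreover have "y * y\<^sup>2 \<le> 0" using False by (intro mult_nonpos_nonneg) auto
      ultimately show ?thesis by linarith
    qed
    ultimately have h: "1 \<le> (1 + y + y\<^sup>2) * (1 - y)" by linarith
    have pos: "1 - y > 0" using False by simp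
    show ?thesis using h pos by (simp add: divide_le_eq)
  qed
  finally show ?thesis .
qed

lemma logloss_step: assumes "\<bar>d\<bar> \<le> 1"
  shows "logloss (z + d) \<le> logloss z - sig z * d + d\<^sup>2 * logloss z"
proof -
  define u where "u = exp (- z)"
  define t where "t = exp (- d)"
  have u: "u > 0" unfolding u_def by simp
  have t: "t > 0" unfolding t_def by simp
  have s: "sig z = u / (1 + u)" unfolding sig_def u_def by (simp add: exp_minus field_simps)
  have l1: "logloss (z + d) = ln (1 + u * t)" unfolding logloss_def u_def t_def by (simp add: exp_add[symmetric])
  have l0: "logloss z = ln (1 + u)" unfolding logloss_def u_def by simp
  have "ln (1 + u * t) - ln (1 + u) \<le> ((1 + u * t) - (1 + u)) / (1 + u)"
    using u t by (intro ln_diff_le) (auto simp: add_pos_pos)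
  also have "\<dots> = sig z * (t - 1)" unfolding s by (simp add: field_simps)
  also have "\<dots> \<le> sig z * (- d + d\<^sup>2)"
  proof (rule mult_left_mono)
    show "t - 1 \<le> - d + d\<^sup>2" using exp_quad[of "- d"] assms unfolding t_def by simp
  qed (rule sig_nonneg)
  also have "\<dots> = - sig z * d + sig z * d\<^sup>2" by (simp add: algebra_simps)
  also have "\<dots> \<le> - sig z * d + logloss z * d\<^sup>2"
    using sig_le_logloss[of z] by (simp add: mult_right_mono)
  finally show ?thesis unfolding l1 l0 by (simp add: algebra_simps)
qed

lemma gderiv_term: "GDERIV (\<lambda>w. logloss (inner w a)) v :> (- sig (inner v a)) *\<^sub>R a"
proof -
  have "GDERIV (\<lambda>w. inner w a) v :> a"
    unfolding gderiv_def by (simp add: bounded_linear.has_derivative[OF bounded_linear_inner_left] inner_commute)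
  from GDERIV_DERIV_compose[OF this logloss_deriv] show ?thesis .
qed

lemma gderiv_Floc: "GDERIV (Floc n x m) v :> - ((1 / real n) *\<^sub>R (\<Sum>i=1..n. sig (inner v (x m i)) *\<^sub>R x m i))"
proof -
  have "\<And>i. ((\<lambda>w. logloss (inner w (x m i))) has_derivative (\<lambda>h. inner h ((- sig (inner v (x m i))) *\<^sub>R x m i))) (at v)"
    using gderiv_term unfolding gderiv_def by blast
  then have "((\<lambda>w. \<Sum>i=1..n. logloss (inner w (x m i))) has_derivative (\<lambda>h. \<Sum>i=1..n. inner h ((- sig (inner v (x m i))) *\<^sub>R x m i))) (at v)"
    by (rule has_derivative_sum)
  then have "((\<lambda>w. (1 / real n) * (\<Sum>i=1..n. logloss (inner w (x m i)))) has_derivative (\<lambda>h. (1 / real n) * (\<Sum>i=1..n. inner h ((- sig (inner v (x m i))) *\<^sub>R x m i)))) (at v)"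
    by (rule has_derivative_mult_right)
  then show ?thesis unfolding gderiv_def Floc_def[abs_def]
    by (simp add: inner_sum_right inner_diff_right sum_negf)
qed

lemma grad_Floc: "grad (Floc n x m) v = - ((1 / real n) *\<^sub>R (\<Sum>i=1..n. sig (inner v (x m i)) *\<^sub>R x m i))"
  unfolding grad_def
proof (rule the_equality)
  show "GDERIV (Floc n x m) v :> - ((1 / real n) *\<^sub>R (\<Sum>i=1..n. sig (inner v (x m i)) *\<^sub>R x m i))" by (rule gderiv_Floc)
next
  fix D assume D: "GDERIV (Floc n x m) v :> D"
  have eq: "(\<lambda>h. inner h D) = (\<lambda>h. inner h (- ((1 / real n) *\<^sub>R (\<Sum>i=1..n. sig (inner v (x m i)) *\<^sub>R x m i))))"
    using has_derivative_unique[OF D[unfolded gderiv_def] gderiv_Floc[unfolded gderiv_def]] .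
  have H: "\<forall>h. inner h D = inner h (- ((1 / real n) *\<^sub>R (\<Sum>i=1..n. sig (inner v (x m i)) *\<^sub>R x m i)))" using fun_cong[OF eq] by blast
  show "D = - ((1 / real n) *\<^sub>R (\<Sum>i=1..n. sig (inner v (x m i)) *\<^sub>R x m i))" using vector_eq_ldot[of D "- ((1 / real n) *\<^sub>R (\<Sum>i=1..n. sig (inner v (x m i)) *\<^sub>R x m i))"] H by blast
qed

lemma Floc_nonneg: "0 \<le> Floc n x m v"
  unfolding Floc_def by (intro mult_nonneg_nonneg sum_nonneg logloss_nonneg) auto

lemma grad_norm_le:
  assumes "\<And>i. i \<in> {1..n} \<Longrightarrow> norm (x m i) \<le> 1"
  shows "norm (grad (Floc n x m) v) \<le> Floc n x m v"
proof -
  have "norm (\<Sum>i=1..n. sig (inner v (x m i)) *\<^sub>R x m i) \<le> (\<Sum>i=1..n. norm (sig (inner v (x m i)) *\<^sub>R x m i))"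
    by (rule norm_sum)
  also have "\<dots> \<le> (\<Sum>i=1..n. logloss (inner v (x m i)))"
  proof (rule sum_mono)
    fix i assume i: "i \<in> {1..n}"
    have "norm (sig (inner v (x m i)) *\<^sub>R x m i) = sig (inner v (x m i)) * norm (x m i)"
      using sig_nonneg by simp
    also have "\<dots> \<le> sig (inner v (x m i)) * 1"
      using assms[OF i] sig_nonneg by (intro mult_left_mono) auto
    also have "\<dots> \<le> logloss (inner v (x m i))" using sig_le_logloss by simp
    finally show "norm (sig (inner v (x m i)) *\<^sub>R x m i) \<le> logloss (inner v (x m i))" .
  qed
  finally show ?thesis unfolding grad_Floc Floc_def
    by (simp add: divide_right_mono)
qed

lemma descent:
  assumes "\<And>i. i \<in> {1..n} \<Longrightarrow> norm (x m i) \<le> 1" and "n \<ge> 1"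
    and "eta > 0" and "eta * Floc n x m v \<le> 1"
  shows "Floc n x m (v - eta *\<^sub>R grad (Floc n x m) v) \<le> Floc n x m v"
proof -
  define F where "F = Floc n x m v"
  define S where "S = (\<Sum>i=1..n. sig (inner v (x m i)) *\<^sub>R x m i)"
  define G where "G = (1 / real n) *\<^sub>R S"
  have SG: "S = real n *\<^sub>R G" unfolding G_def using assms(2) by simp
  have vp: "v - eta *\<^sub>R grad (Floc n x m) v = v + eta *\<^sub>R G"
    unfolding grad_Floc G_def S_def by simp
  have "norm (grad (Floc n x m) v) \<le> Floc n x m v" by (rule grad_norm_le) (rule assms(1))
  then have GF: "norm G \<le> F" unfolding F_def grad_Floc G_def S_def by simp
  define d where "d i = eta * inner G (x m i)" for i
  have dle: "\<bar>d i\<bar> \<le> eta * norm G" if i: "i \<in> {1..n}" for i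
  proof -
    have "\<bar>inner G (x m i)\<bar> \<le> norm G * norm (x m i)" by (rule Cauchy_Schwarz_ineq2)
    also have "\<dots> \<le> norm G" using assms(1)[OF i] by (simp add: mult_left_le)
    finally show ?thesis unfolding d_def using assms(3) by (simp add: abs_mult)
  qed
  have d1: "\<bar>d i\<bar> \<le> 1" if i: "i \<in> {1..n}" for i
  proof -
    have "eta * norm G \<le> eta * F" using GF assms(3) by simp
    then show ?thesis using dle[OF i] assms(4) unfolding F_def by linarith
  qed
  have d2: "(d i)\<^sup>2 \<le> (eta * norm G)\<^sup>2" if i: "i \<in> {1..n}" for i
  proof -
    have "\<bar>d i\<bar> \<le> \<bar>eta * norm G\<bar>" using dle[OF i] assms(3) by simp
    then show ?thesis by (simp only: abs_le_square_iff)
  qed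
  have inn: "inner (v + eta *\<^sub>R G) (x m i) = inner v (x m i) + d i" for i
    unfolding d_def by (simp add: inner_add_left)
  define L where "L = (\<Sum>i=1..n. logloss (inner v (x m i)))"
  have nF: "real n * F = L" unfolding F_def Floc_def L_def using assms(2) by simp
  have s1: "(\<Sum>i=1..n. logloss (inner (v + eta *\<^sub>R G) (x m i)))
      \<le> (\<Sum>i=1..n. logloss (inner v (x m i)) - sig (inner v (x m i)) * d i + (d i)\<^sup>2 * logloss (inner v (x m i)))"
    unfolding inn by (intro sum_mono logloss_step d1) auto
  have s2: "(\<Sum>i=1..n. logloss (inner v (x m i)) - sig (inner v (x m i)) * d i + (d i)\<^sup>2 * logloss (inner v (x m i)))
      = L - (\<Sum>i=1..n. sig (inner v (x m i)) * d i) + (\<Sum>i=1..n. (d i)\<^sup>2 * logloss (inner v (x m i)))"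
    unfolding L_def by (simp only: sum.distrib sum_subtractf)
  have "inner G S = (\<Sum>i=1..n. sig (inner v (x m i)) * inner G (x m i))"
    unfolding S_def by (simp add: inner_sum_right)
  then have s3: "(\<Sum>i=1..n. sig (inner v (x m i)) * d i) = eta * inner G S"
    unfolding d_def by (simp add: sum_distrib_left mult.left_commute)
  have s4: "eta * inner G S = eta * real n * (norm G)\<^sup>2"
    unfolding SG by (simp add: power2_norm_eq_inner)
  have s5: "(\<Sum>i=1..n. (d i)\<^sup>2 * logloss (inner v (x m i))) \<le> (\<Sum>i=1..n. (eta * norm G)\<^sup>2 * logloss (inner v (x m i)))"
    by (intro sum_mono mult_right_mono d2 logloss_nonneg) auto
  have s6: "(\<Sum>i=1..n. (eta * norm G)\<^sup>2 * logloss (inner v (x m i))) = (eta * norm G)\<^sup>2 * (real n * F)"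
    unfolding nF L_def by (simp add: sum_distrib_left)
  have A: "(\<Sum>i=1..n. logloss (inner (v + eta *\<^sub>R G) (x m i)))
      \<le> real n * F - eta * real n * (norm G)\<^sup>2 + (eta * norm G)\<^sup>2 * (real n * F)"
    using s1 s2 s3 s4 s5 s6 nF by linarith
  have B: "(eta * norm G)\<^sup>2 * F \<le> eta * (norm G)\<^sup>2"
  proof -
    have "(eta * norm G)\<^sup>2 * F = eta * (norm G)\<^sup>2 * (eta * F)" by (simp add: power2_eq_square)
    also have "\<dots> \<le> eta * (norm G)\<^sup>2 * 1"
      using assms(3,4) unfolding F_def by (intro mult_left_mono) auto
    finally show ?thesis by simp
  qed
  have "(\<Sum>i=1..n. logloss (inner (v + eta *\<^sub>R G) (x m i))) \<le> real n * F"
  proof -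
    have "(eta * norm G)\<^sup>2 * (real n * F) \<le> eta * real n * (norm G)\<^sup>2"
      using mult_left_mono[OF B, of "real n"] by (simp add: algebra_simps)
    then show ?thesis using A by linarith
  qed
  then have "(1 / real n) * (\<Sum>i=1..n. logloss (inner (v + eta *\<^sub>R G) (x m i))) \<le> (1 / real n) * (real n * F)"
    by (intro mult_left_mono) auto
  also have "\<dots> = F" using assms(2) by simp
  also have "(1 / real n) * (\<Sum>i=1..n. logloss (inner (v + eta *\<^sub>R G) (x m i))) = Floc n x m (v + eta *\<^sub>R G)"
    unfolding Floc_def by simp
  finally show ?thesis unfolding vp F_def .

qed

lemma local_bound:
  assumes "\<And>i. i \<in> {1..n} \<Longrightarrow> norm (x m i) \<le> 1" and "n \<ge> 1"
    and "eta > 0" and "eta * Floc n x m w \<le> 1"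
  shows "Floc n x m (local_iter n x eta m w k) \<le> Floc n x m w
     \<and> norm (local_iter n x eta m w k - w) \<le> real k * eta * Floc n x m w"
proof (induction k)
  case 0 then show ?case by simp
next
  case (Suc k)
  let ?v = "local_iter n x eta m w k"
  have IH1: "Floc n x m ?v \<le> Floc n x m w" and IH2: "norm (?v - w) \<le> real k * eta * Floc n x m w"
    using Suc.IH by auto
  have e0: "eta * Floc n x m ?v \<le> eta * Floc n x m w"
    using IH1 assms(3) by (intro mult_left_mono) auto
  have e: "eta * Floc n x m ?v \<le> 1" using e0 assms(4) by linarith
  have 1: "Floc n x m (local_iter n x eta m w (Suc k)) \<le> Floc n x m w"
    using descent[OF assms(1,2,3) e] Suc.IH by simp
  have "norm (local_iter n x eta m w (Suc k) - w) = norm ((?v - w) - eta *\<^sub>R grad (Floc n x m) ?v)"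
    by (simp add: algebra_simps)
  also have "\<dots> \<le> norm (?v - w) + eta * norm (grad (Floc n x m) ?v)"
    using norm_triangle_ineq4[of "?v - w" "eta *\<^sub>R grad (Floc n x m) ?v"] assms(3) by simp
  also have "\<dots> \<le> real k * eta * Floc n x m w + eta * Floc n x m w"
  proof -
    have "norm (grad (Floc n x m) ?v) \<le> Floc n x m ?v" by (rule grad_norm_le) (rule assms(1))
    then have "eta * norm (grad (Floc n x m) ?v) \<le> eta * Floc n x m ?v"
      using assms(3) by (intro mult_left_mono) auto
    then show ?thesis using IH2 e0 by linarith
  qed
  also have "\<dots> = real (Suc k) * eta * Floc n x m w" by (simp add: algebra_simps)
  finally show ?case using 1 by simp
qed

theorem lemma4p7:
  fixes x :: "nat \<Rightarrow> nat \<Rightarrow> 'a::euclidean_space"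
    and M n K r :: nat and eta :: real and w0 :: 'a
  assumes "M \<ge> 1" and "n \<ge> 1"
    and "\<And>m i. m \<in> {1..M} \<Longrightarrow> i \<in> {1..n} \<Longrightarrow> norm (x m i) \<le> 1"
    and "\<exists>w. \<forall>m\<in>{1..M}. \<forall>i\<in>{1..n}. inner w (x m i) > 0"
    and "eta > 0"
    and "Fglob M n x (round_iter M n x eta K w0 r) \<le> 1 / (eta * real K * real M)"
  shows "\<forall>m\<in>{1..M}. \<forall>k\<in>{1..K}.
           norm (local_iter n x eta m (round_iter M n x eta K w0 r) k - round_iter M n x eta K w0 r) \<le> 1"
proof (intro ballI)
  fix m k assume m: "m \<in> {1..M}" and k: "k \<in> {1..K}"
  define w where "w = round_iter M n x eta K w0 r"
  have K: "K \<ge> 1" using k by simp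
  have "Floc n x m w \<le> (\<Sum>j=1..M. Floc n x j w)"
    using m by (intro member_le_sum Floc_nonneg) auto
  also have "\<dots> = real M * Fglob M n x w" unfolding Fglob_def using assms(1) by simp
  also have "\<dots> \<le> real M * (1 / (eta * real K * real M))"
    using assms(6) unfolding w_def by (intro mult_left_mono) auto
  also have "\<dots> = 1 / (eta * real K)" using assms(1) by simp
  finally have FK: "Floc n x m w \<le> 1 / (eta * real K)" .
  have eK: "real K * eta * Floc n x m w \<le> 1"
  proof -
    have "real K * eta * Floc n x m w \<le> real K * eta * (1 / (eta * real K))"
      using FK K assms(5) by (intro mult_left_mono) auto
    also have "\<dots> = 1" using K assms(5) by simp
    finally show ?thesis .
  qed
  have e1: "eta * Floc n x m w \<le> 1"
  proof -
    have "1 * (eta * Floc n x m w) \<le> real K * (eta * Floc n x m w)"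
      using K assms(5) Floc_nonneg[of n x m w] by (intro mult_right_mono) auto
    then have "eta * Floc n x m w \<le> real K * eta * Floc n x m w" by (simp add: mult.assoc)
    then show ?thesis using eK by linarith
  qed
  have "norm (local_iter n x eta m w k - w) \<le> real k * eta * Floc n x m w"
    using local_bound[OF _ assms(2,5) e1] assms(3)[OF m] by blast
  also have "\<dots> \<le> real K * eta * Floc n x m w"
    using k assms(5) Floc_nonneg[of n x m w] by (intro mult_right_mono) auto
  finally show "norm (local_iter n x eta m (round_iter M n x eta K w0 r) k - round_iter M n x eta K w0 r) \<le> 1"
    using eK unfolding w_def by simp
qed

end
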